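(* Let $\mathcal{L}=(n,\mathcal{M},\mathcal{C})$ be a simple linearization and let $\mathcal{T}\subseteq\mathcal{P}$. If $D(\mathcal{L})$ has a subgraph $Z$ whose underlying undirected graph is a cycle, whose node set is contained in $\mathrm{succ}(\mathcal{T})$, and which satisfies $|U(Z)|=1$, then $\mathrm{proj}_{\mathcal{S}\cup\mathcal{T}}(P(\mathcal{L}))$ is not integral.
   Context: $[n]=\{1,\dots,n\}$; a monomial is a nonempty subset of $[n]$; $\mathcal{S}=\{\{i\}:i\in[n]\}$. A linearization is a triple $\mathcal{L}=(n,\mathcal{M},\mathcal{C})$, where $\mathcal{M}$ is a set of monomials with $\mathcal{S}\subseteq\mathcal{M}$ and $\mathcal{C}$ is a set of AND-constraints; each AND-constraint is a set $c\subseteq\mathcal{M}$ whose union $\bigcup c$ (resultant) lies in $\mathcal{M}$. $\mathcal{P}=\mathcal{M}\setminus\mathcal{S}$. Linearizations are consistent: each $m\in\mathcal{P}$ is the resultant of some $c$ with $|m'|<|m|$ for all $m'\in c$. $\mathcal{L}$ is simple if each proper monomial is the resultant of exactly one AND-constraint and $|\mathcal{C}|=|\mathcal{P}|$. $P(\mathcal{L})\subseteq\mathbb{R}^{\mathcal{M}}$ is the set of $y$ with $0\le y_m\le1$ ($m\in\mathcal{M}$), $y_{\bigcup c}\le y_m$ ($c\in\mathcal{C}$, $m\in c$), $\sum_{m\in c}y_m\le y_{\bigcup c}+|c|-1$ ($c\in\mathcal{C}$). $D(\mathcal{L})$ has node set $\mathcal{M}$ and, for each $c\in\mathcal{C}$,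 arcs from $\bigcup c$ to each $m\in c$. Cycles are simple. $\mathrm{succ}(W)$ is the set of nodes reachable by directed paths from $W$, including $W$. $U(Z)$ is the set of nodes of out-degree at least $2$ in $Z$. $\mathrm{proj}_{\mathcal{M}'}$ is orthogonal projection onto coordinates in $\mathcal{M}'$. *)

theory Defs
  imports Complex_Main
begin

type_synonym monomial = "nat set"
type_synonym andc = "monomial set"

definition singletons :: "nat \<Rightarrow> monomial set" where
  "singletons n = {{i} | i. i \<in> {1..n}}"

definition proper_monos :: "nat \<Rightarrow> monomial set \<Rightarrow> monomial set" where
  "proper_monos n M = M - singletons n"

definition linearization :: "nat \<Rightarrow> monomial set \<Rightarrow> andc set \<Rightarrow> bool" where
  "linearization n M C \<longleftrightarrow>
     (\<forall>m\<in>M. m \<noteq> {} \<and> m \<subseteq> {1..n}) \<and>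
     singletons n \<subseteq> M \<and>
     (\<forall>c\<in>C. c \<subseteq> M \<and> \<Union>c \<in> M) \<and>
     (\<forall>m\<in>proper_monos n M. \<exists>c\<in>C. \<Union>c = m \<and> (\<forall>m'\<in>c. card m' < card m))"

definition simple_lin :: "nat \<Rightarrow> monomial set \<Rightarrow> andc set \<Rightarrow> bool" where
  "simple_lin n M C \<longleftrightarrow> linearization n M C \<and>
     (\<forall>m\<in>proper_monos n M. \<exists>!c. c \<in> C \<and> \<Union>c = m) \<and>
     card C = card (proper_monos n M)"

text \<open>Points of R^M are represented as functions that vanish outside M.\<close>
definition polytope_L :: "nat \<Rightarrow> monomial set \<Rightarrow> andc set \<Rightarrow> (monomial \<Rightarrow> real) set" where
  "polytope_L n M C = {y. (\<forall>m. m \<notin> M \<longrightarrow> y m = 0) \<and>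
     (\<forall>m\<in>M. 0 \<le> y m \<and> y m \<le> 1) \<and>
     (\<forall>c\<in>C. \<forall>m\<in>c. y (\<Union>c) \<le> y m) \<and>
     (\<forall>c\<in>C. (\<Sum>m\<in>c. y m) \<le> y (\<Union>c) + real (card c) - 1)}"

definition arcs_D :: "andc set \<Rightarrow> (monomial \<times> monomial) set" where
  "arcs_D C = {(\<Union>c, m) | c m. c \<in> C \<and> m \<in> c}"

definition succ_D :: "andc set \<Rightarrow> monomial set \<Rightarrow> monomial set" where
  "succ_D C W = {v. \<exists>w\<in>W. (w, v) \<in> (arcs_D C)\<^sup>*}"

text \<open>Z (given by its arc set) is a subgraph of D(L) whose underlying undirected graph
  is a (simple) cycle through the distinct nodes vs (in cyclic order).\<close>
definition undirected_cycle_subgraph ::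
  "andc set \<Rightarrow> (monomial \<times> monomial) set \<Rightarrow> monomial list \<Rightarrow> bool" where
  "undirected_cycle_subgraph C Z vs \<longleftrightarrow>
     Z \<subseteq> arcs_D C \<and> distinct vs \<and> length vs \<ge> 3 \<and>
     {{a, b} | a b. (a, b) \<in> Z} =
       {{vs ! i, vs ! ((i + 1) mod length vs)} | i. i < length vs} \<and>
     (\<forall>i < length vs. \<not> ((vs ! i, vs ! ((i + 1) mod length vs)) \<in> Z \<and>
                           (vs ! ((i + 1) mod length vs), vs ! i) \<in> Z))"

definition nodes_of :: "(monomial \<times> monomial) set \<Rightarrow> monomial set" where
  "nodes_of Z = fst ` Z \<union> snd ` Z"

definition U_nodes :: "(monomial \<times> monomial) set \<Rightarrow> monomial set" where
  "U_nodes Z = {v \<in> nodes_of Z. card {w. (v, w) \<in> Z} \<ge> 2}"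

definition proj_on :: "monomial set \<Rightarrow> (monomial \<Rightarrow> real) \<Rightarrow> (monomial \<Rightarrow> real)" where
  "proj_on M' y = (\<lambda>m. if m \<in> M' then y m else 0)"

definition vertex_of :: "(monomial \<Rightarrow> real) \<Rightarrow> (monomial \<Rightarrow> real) set \<Rightarrow> bool" where
  "vertex_of v K \<longleftrightarrow> v \<in> K \<and>
     \<not> (\<exists>a\<in>K. \<exists>b\<in>K. \<exists>t::real. 0 < t \<and> t < 1 \<and> a \<noteq> b \<and>
          v = (\<lambda>m. (1 - t) * a m + t * b m))"

definition integral_polytope :: "(monomial \<Rightarrow> real) set \<Rightarrow> bool" where
  "integral_polytope K \<longleftrightarrow> (\<forall>v. vertex_of v K \<longrightarrow> (\<forall>m. v m \<in> \<int>))"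

end

theory Submission imports Defs begin
definition cons_of :: "andc set \<Rightarrow> monomial \<Rightarrow> andc" where
  "cons_of C m = (THE c. c \<in> C \<and> \<Union>c = m)"
function npw :: "andc set \<Rightarrow> nat \<Rightarrow> monomial \<Rightarrow> real" where
  "npw C j m = (if card m \<le> 1 then (if m = {j} then 1 else 0)
     else (\<Sum>m'\<in>{x \<in> cons_of C m. card x < card m}. npw C j m'))"
  by pat_completeness auto
termination by (relation "measure (\<lambda>(C,j,m). card m)") auto
declare npw.simps[simp del]

lemma finM: assumes "linearization n M C" shows "finite M" "M \<subseteq> Pow {1..n}"
proof -
  show "M \<subseteq> Pow {1..n}" using assms unfolding linearization_def by auto
  then show "finite M" by (rule finite_subset) auto
qed

lemma finC: assumes "linearization n M C" shows "finite C"
proof -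
  have "C \<subseteq> Pow M" using assms unfolding linearization_def by auto
  then show ?thesis using finM[OF assms] by (meson finite_Pow_iff finite_subset)
qed

lemma lin4: assumes "linearization n M C"
  shows "\<forall>m\<in>proper_monos n M. \<exists>c\<in>C. \<Union>c = m \<and> (\<forall>m'\<in>c. card m' < card m)"
  using assms unfolding linearization_def by (elim conjE) assumption

lemma lin3: assumes "linearization n M C"
  shows "\<forall>c\<in>C. c \<subseteq> M \<and> \<Union>c \<in> M"
  using assms unfolding linearization_def by (elim conjE) assumption

lemma cons_prop: assumes "simple_lin n M C" "m \<in> proper_monos n M"
  shows "cons_of C m \<in> C" "\<Union>(cons_of C m) = m"
    "\<And>m'. m' \<in> cons_of C m \<Longrightarrow> m' \<in> M \<and> card m' < card m"
proof -
  have ex1: "\<exists>!c. c \<in> C \<and> \<Union>c = m" using assms unfolding simple_lin_def by auto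
  have th: "cons_of C m \<in> C \<and> \<Union>(cons_of C m) = m"
    unfolding cons_of_def using theI'[OF ex1] .
  then show "cons_of C m \<in> C" "\<Union>(cons_of C m) = m" by auto
  have lin: "linearization n M C" using assms unfolding simple_lin_def by auto
  obtain c where c: "c \<in> C" "\<Union>c = m \<and> (\<forall>m'\<in>c. card m' < card m)"
    using bspec[OF lin4[OF lin] assms(2)] by metis
  have ceq: "c = cons_of C m" using ex1 c th by metis
  have cM: "cons_of C m \<subseteq> M" using th lin3[OF lin] by simp
  show "\<And>m'. m' \<in> cons_of C m \<Longrightarrow> m' \<in> M \<and> card m' < card m"
  proof -
    fix m' assume "m' \<in> cons_of C m"
    then show "m' \<in> M \<and> card m' < card m" using c(2) ceq cM by auto
  qed
qed

lemma C_proper: assumes "simple_lin n M C" "c \<in> C"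
  shows "\<Union>c \<in> proper_monos n M" "cons_of C (\<Union>c) = c"
proof -
  have lin: "linearization n M C" using assms unfolding simple_lin_def by auto
  let ?P = "proper_monos n M"
  have fP: "finite ?P" using finM[OF lin] unfolding proper_monos_def by auto
  have sub: "cons_of C ` ?P \<subseteq> C" using cons_prop[OF assms(1)] by auto
  have inj: "inj_on (cons_of C) ?P"
    by (metis (mono_tags, lifting) assms(1) cons_prop(2) inj_onI)
  have "card (cons_of C ` ?P) = card C"
    using card_image[OF inj] assms(1) unfolding simple_lin_def by auto
  then have "cons_of C ` ?P = C" using card_subset_eq[OF finC[OF lin] sub] by auto
  then obtain m where m: "m \<in> ?P" "c = cons_of C m" using assms(2) by auto
  then show "\<Union>c \<in> ?P" "cons_of C (\<Union>c) = c" using cons_prop[OF assms(1)] by auto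
qed

lemma M_cases: assumes "linearization n M C" "m \<in> M"
  shows "card m \<le> 1 \<Longrightarrow> \<exists>i\<in>{1..n}. m = {i}"
    "\<not> card m \<le> 1 \<Longrightarrow> m \<in> proper_monos n M"
proof -
  have ne: "m \<noteq> {}" "m \<subseteq> {1..n}" using assms unfolding linearization_def by auto
  have fin: "finite m" using ne(2) finite_subset by blast
  show "card m \<le> 1 \<Longrightarrow> \<exists>i\<in>{1..n}. m = {i}"
  proof -
    assume "card m \<le> 1"
    moreover have "card m \<noteq> 0" using ne fin by simp
    ultimately have "card m = 1" by linarith
    then obtain i where "m = {i}" using card_1_singletonE by blast
    then show ?thesis using ne by auto
  qed
  show "\<not> card m \<le> 1 \<Longrightarrow> m \<in> proper_monos n M"
    using assms(2) unfolding proper_monos_def singletons_def by auto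
qed

lemma npw_proper: assumes "simple_lin n M C" "m \<in> proper_monos n M"
  shows "npw C j m = (\<Sum>m'\<in>cons_of C m. npw C j m')"
proof -
  have lin: "linearization n M C" using assms unfolding simple_lin_def by auto
  have "m \<in> M" using assms unfolding proper_monos_def by auto
  have "\<not> card m \<le> 1"
  proof
    assume "card m \<le> 1"
    then obtain i where "i \<in> {1..n}" "m = {i}" using M_cases[OF lin \<open>m \<in> M\<close>] by auto
    then show False using assms(2) unfolding proper_monos_def singletons_def by auto
  qed
  moreover have "{x \<in> cons_of C m. card x < card m} = cons_of C m"
    using cons_prop(3)[OF assms] by auto
  ultimately show ?thesis by (subst npw.simps) simp
qed

lemma npw_nonneg: "npw C j m \<ge> 0"
proof (induction C j m rule: npw.induct)
  case (1 C j m)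
  then show ?case by (subst npw.simps) (auto intro: sum_nonneg)
qed

lemma npw_single: "npw C j {i} = (if i = j then 1 else 0)"
  by (subst npw.simps) auto

lemma fin_c: assumes "linearization n M C" "c \<in> C" shows "finite c"
  using assms finM(1)[OF assms(1)] unfolding linearization_def by (meson finite_subset)

lemma npw_ge1: assumes "simple_lin n M C" "m \<in> M" "j \<in> m"
  shows "npw C j m \<ge> 1"
  using assms(2,3)
proof (induction "card m" arbitrary: m rule: less_induct)
  case less
  have lin: "linearization n M C" using assms unfolding simple_lin_def by auto
  show ?case
  proof (cases "card m \<le> 1")
    case True
    then obtain i where "m = {i}" using M_cases(1)[OF lin less.prems(1)] by auto
    then show ?thesis using less.prems npw_single by auto
  next
    case False
    then have P: "m \<in> proper_monos n M" using M_cases(2)[OF lin less.prems(1)] by auto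
    obtain m' where m': "m' \<in> cons_of C m" "j \<in> m'" using cons_prop(2)[OF assms(1) P] less.prems(2) by auto
    have m'M: "m' \<in> M" "card m' < card m" using cons_prop(3)[OF assms(1) P m'(1)] by auto
    have "npw C j m' \<ge> 1" using less.hyps[OF m'M(2) m'M(1) m'(2)] .
    moreover have "finite (cons_of C m)"
      using fin_c[OF lin cons_prop(1)[OF assms(1) P]] .
    ultimately have "(\<Sum>x\<in>cons_of C m. npw C j x) \<ge> 1"
      using member_le_sum[OF m'(1), of "npw C j"] npw_nonneg by (meson order_trans)
    then show ?thesis using npw_proper[OF assms(1) P] by simp
  qed
qed


lemma npw_arc: assumes "simple_lin n M C" "(a, b) \<in> arcs_D C"
  shows "npw C j b \<le> npw C j a"
proof -
  have lin: "linearization n M C" using assms unfolding simple_lin_def by auto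
  obtain c where c: "c \<in> C" "a = \<Union>c" "b \<in> c" using assms(2) unfolding arcs_D_def by auto
  have "npw C j a = (\<Sum>x\<in>c. npw C j x)"
    using npw_proper[OF assms(1) C_proper(1)[OF assms(1) c(1)]] C_proper(2)[OF assms(1) c(1)] c by simp
  also have "\<dots> \<ge> npw C j b" by (rule member_le_sum[OF c(3)]) (auto simp: npw_nonneg fin_c[OF lin c(1)])
  finally show ?thesis .
qed

lemma npw_rtrancl: assumes "simple_lin n M C" "(a, b) \<in> (arcs_D C)\<^sup>*"
  shows "npw C j b \<le> npw C j a"
  using assms(2)
proof (induction rule: rtrancl_induct)
  case base then show ?case by simp
next
  case (step y z) then show ?case using npw_arc[OF assms(1) step(2), of j] by linarith
qed

lemma npw_two: assumes "simple_lin n M C" "c \<in> C" "x \<in> c" "y \<in> c" "x \<noteq> y"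
  shows "npw C j x + npw C j y \<le> npw C j (\<Union>c)"
proof -
  have lin: "linearization n M C" using assms unfolding simple_lin_def by auto
  have "npw C j (\<Union>c) = (\<Sum>x\<in>c. npw C j x)"
    using npw_proper[OF assms(1) C_proper(1)[OF assms(1,2)]] C_proper(2)[OF assms(1,2)] by simp
  also have "(\<Sum>z\<in>c. npw C j z) \<ge> (\<Sum>z\<in>{x,y}. npw C j z)"
    by (rule sum_mono2) (use assms fin_c[OF lin assms(2)] npw_nonneg in auto)
  finally show ?thesis using assms(5) by simp
qed

lemma min_sum: assumes "finite A" "\<forall>i\<in>A. (x i::real) \<ge> 0"
  shows "min 1 (\<Sum>i\<in>A. min 1 (x i)) = min 1 (\<Sum>i\<in>A. x i)"
proof (cases "\<exists>i\<in>A. x i \<ge> 1")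
  case True
  then obtain i where i: "i \<in> A" "x i \<ge> 1" by auto
  have "(\<Sum>i\<in>A. min 1 (x i)) \<ge> min 1 (x i)"
    using member_le_sum[OF i(1), of "\<lambda>i. min 1 (x i)"] assms by auto
  moreover have "(\<Sum>i\<in>A. x i) \<ge> x i" using member_le_sum[OF i(1), of x] assms by auto
  ultimately show ?thesis using i by auto
next
  case False
  then have "\<forall>i\<in>A. min 1 (x i) = x i" by auto
  then show ?thesis by simp
qed

lemma min_sum_le: assumes "finite A" "\<forall>i\<in>A. (x i::real) \<ge> 0"
  shows "min 1 (\<Sum>i\<in>A. x i) \<le> (\<Sum>i\<in>A. min 1 (x i))"
  using min_sum[OF assms] by linarith

lemma lemA: assumes "simple_lin n M C" "y \<in> polytope_L n M C"
  "\<forall>i\<in>{1..n}. i \<noteq> j \<longrightarrow> y {i} = 1" "j \<in> {1..n}" "m \<in> M"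
  shows "y m \<ge> 1 - min 1 ((1 - y {j}) * npw C j m)"
  using assms(5)
proof (induction "card m" arbitrary: m rule: less_induct)
  case less
  have lin: "linearization n M C" using assms unfolding simple_lin_def by auto
  have yP: "\<forall>m\<in>M. 0 \<le> y m \<and> y m \<le> 1" "\<forall>c\<in>C. (\<Sum>m\<in>c. y m) \<le> y (\<Union>c) + real (card c) - 1"
    using assms(2) unfolding polytope_L_def by auto
  have jM: "{j} \<in> M" using assms(4) lin unfolding linearization_def singletons_def by auto
  show ?case
  proof (cases "card m \<le> 1")
    case True
    then obtain i where i: "i \<in> {1..n}" "m = {i}" using M_cases(1)[OF lin less.prems(1)] by auto
    show ?thesis
    proof (cases "i = j")
      case True
      have "y {j} \<in> {0..1}" using yP(1) jM by auto
      then show ?thesis using i True npw_single by auto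
    next
      case False
      then show ?thesis using i assms(3) npw_single[of C j i] by auto
    qed
  next
    case False
    then have P: "m \<in> proper_monos n M" using M_cases(2)[OF lin less.prems(1)] by auto
    let ?c = "cons_of C m"
    let ?e = "1 - y {j}"
    have cC: "?c \<in> C" "\<Union>?c = m" using cons_prop[OF assms(1) P] by auto
    have fc: "finite ?c" using fin_c[OF lin cC(1)] .
    have e0: "?e \<ge> 0" using yP(1) jM by auto
    have IH: "\<forall>m'\<in>?c. y m' \<ge> 1 - min 1 (?e * npw C j m')"
      using less.hyps cons_prop(3)[OF assms(1) P] by blast
    have "(\<Sum>m'\<in>?c. y m') \<ge> (\<Sum>m'\<in>?c. 1 - min 1 (?e * npw C j m'))"
      using IH by (intro sum_mono) auto
    also have "(\<Sum>m'\<in>?c. 1 - min 1 (?e * npw C j m')) = real (card ?c) - (\<Sum>m'\<in>?c. min 1 (?e * npw C j m'))"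
      by (simp add: sum_subtractf)
    finally have s1: "y m \<ge> 1 - (\<Sum>m'\<in>?c. min 1 (?e * npw C j m'))"
      using yP(2) cC by force
    have "min 1 (\<Sum>m'\<in>?c. min 1 (?e * npw C j m')) = min 1 (\<Sum>m'\<in>?c. ?e * npw C j m')"
      using min_sum[OF fc, of "\<lambda>m'. ?e * npw C j m'"] e0 npw_nonneg by auto
    also have "\<dots> = min 1 (?e * npw C j m)"
      using npw_proper[OF assms(1) P] by (simp add: sum_distrib_left)
    finally have s2: "min 1 (\<Sum>m'\<in>?c. min 1 (?e * npw C j m')) = min 1 (?e * npw C j m)" .
    have "y m \<ge> 0" using yP(1) less.prems by auto
    then show ?thesis using s1 s2 by linarith
  qed
qed

lemma lemB: assumes "simple_lin n M C" "0 \<le> e"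
  shows "(\<lambda>m. if m \<in> M then 1 - min 1 (e * npw C j m) else 0) \<in> polytope_L n M C"
proof -
  have lin: "linearization n M C" using assms unfolding simple_lin_def by auto
  let ?f = "\<lambda>m. if m \<in> M then 1 - min 1 (e * npw C j m) else 0"
  have cM: "\<And>c. c \<in> C \<Longrightarrow> c \<subseteq> M \<and> \<Union>c \<in> M" using lin unfolding linearization_def by auto
  have pos: "\<And>m. 0 \<le> e * npw C j m" using assms(2) npw_nonneg by simp
  have a1: "\<forall>m\<in>M. 0 \<le> ?f m \<and> ?f m \<le> 1" using pos by auto
  have a2: "\<forall>c\<in>C. \<forall>m\<in>c. ?f (\<Union>c) \<le> ?f m"
  proof (intro ballI)
    fix c m assume c: "c \<in> C" "m \<in> c"
    have "(\<Union>c, m) \<in> arcs_D C" using c unfolding arcs_D_def by auto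
    then have "npw C j m \<le> npw C j (\<Union>c)" using npw_arc[OF assms(1)] by blast
    then have "e * npw C j m \<le> e * npw C j (\<Union>c)" using assms(2) by (simp add: mult_left_mono)
    then show "?f (\<Union>c) \<le> ?f m" using cM[OF c(1)] c by auto
  qed
  have a3: "\<forall>c\<in>C. (\<Sum>m\<in>c. ?f m) \<le> ?f (\<Union>c) + real (card c) - 1"
  proof (intro ballI)
    fix c assume c: "c \<in> C"
    have fc: "finite c" using fin_c[OF lin c] .
    have "(\<Sum>m\<in>c. ?f m) = (\<Sum>m\<in>c. 1 - min 1 (e * npw C j m))"
      using cM[OF c] by (intro sum.cong) auto
    also have "\<dots> = real (card c) - (\<Sum>m\<in>c. min 1 (e * npw C j m))" by (simp add: sum_subtractf)
    finally have s1: "(\<Sum>m\<in>c. ?f m) = real (card c) - (\<Sum>m\<in>c. min 1 (e * npw C j m))" .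
    have "npw C j (\<Union>c) = (\<Sum>x\<in>c. npw C j x)"
      using npw_proper[OF assms(1) C_proper(1)[OF assms(1) c]] C_proper(2)[OF assms(1) c] by simp
    then have "e * npw C j (\<Union>c) = (\<Sum>x\<in>c. e * npw C j x)" by (simp add: sum_distrib_left)
    then have "min 1 (e * npw C j (\<Union>c)) \<le> (\<Sum>m\<in>c. min 1 (e * npw C j m))"
      using min_sum_le[OF fc, of "\<lambda>m. e * npw C j m"] pos by auto
    then show "(\<Sum>m\<in>c. ?f m) \<le> ?f (\<Union>c) + real (card c) - 1" using s1 cM[OF c] by auto
  qed
  show ?thesis unfolding polytope_L_def using a1 a2 a3 by auto
qed

lemma modadd: fixes r d k :: nat assumes "r < k" "d < k"
  shows "(r + d) mod k = (if r + d < k then r + d else r + d - k)"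
proof (cases "r + d < k")
  case True then show ?thesis by simp
next
  case False
  then have "(r + d) mod k = (r + d - k) mod k" using le_mod_geq[of k "r+d"] by simp
  also have "\<dots> = r + d - k" using assms False by simp
  finally show ?thesis using False by simp
qed

lemma cyc:
  assumes arcs: "\<And>a b. (a,b) \<in> Z \<Longrightarrow> b \<subseteq> a \<and> b \<noteq> {}"
    and finZ: "finite Z"
    and ucs: "undirected_cycle_subgraph C Z vs"
    and U1: "card (U_nodes Z) = 1"
  shows "\<exists>u x y. (u,x) \<in> Z \<and> (u,y) \<in> Z \<and> x \<noteq> y \<and> x \<inter> y \<noteq> {} \<and> u \<in> set vs"
proof -
  define k where "k = length vs"
  have dist: "distinct vs" and k3: "k \<ge> 3"
    and edges: "{{a, b} | a b. (a, b) \<in> Z} = {{vs ! i, vs ! ((i + 1) mod k)} | i. i < k}"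
    and noboth: "\<forall>i < k. \<not> ((vs ! i, vs ! ((i + 1) mod k)) \<in> Z \<and> (vs ! ((i + 1) mod k), vs ! i) \<in> Z)"
    using ucs unfolding undirected_cycle_subgraph_def k_def by auto
  obtain u0 where U: "U_nodes Z = {u0}" using U1 card_1_singletonE by blast
  have u0: "u0 \<in> nodes_of Z" "card {w. (u0,w)\<in>Z} \<ge> 2" using U unfolding U_nodes_def by auto
  have edge_in: "\<exists>i<k. {a,b} = {vs!i, vs!((i+1) mod k)}" if "(a,b) \<in> Z" for a b
  proof -
    have "{a,b} \<in> {{a, b} | a b. (a, b) \<in> Z}" using that by auto
    then have "{a,b} \<in> {{vs ! i, vs ! ((i + 1) mod k)} | i. i < k}" using edges by simp
    then show ?thesis by auto
  qed
  have kpos: "0 < k" using k3 by simp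
  have endp: "a \<in> set vs \<and> b \<in> set vs" if ab: "(a,b) \<in> Z" for a b
  proof -
    obtain i where i: "i < k" "{a,b} = {vs!i, vs!((i+1) mod k)}" using edge_in[OF ab] by auto
    have "vs!i \<in> set vs" "vs!((i+1) mod k) \<in> set vs" using i(1) kpos unfolding k_def by auto
    then show ?thesis using i(2) by (auto simp: doubleton_eq_iff)
  qed
  have "u0 \<in> set vs" using u0(1) endp unfolding nodes_of_def by force
  then obtain r where r: "r < k" "vs!r = u0" unfolding k_def by (auto simp: in_set_conv_nth)
  define x where "x d = vs ! ((r+d) mod k)" for d
  have xinj: "i = j" if "i < k" "j < k" "x i = x j" for i j
  proof -
    have "(r+i) mod k = (r+j) mod k"
      using that(3) nth_eq_iff_index_eq[OF dist] kpos unfolding x_def k_def by simp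
    then show ?thesis using modadd[OF r(1) that(1)] modadd[OF r(1) that(2)] that(1,2) by (auto split: if_splits)
  qed
  have x0: "x 0 = u0" using r unfolding x_def by simp
  have xk: "x k = u0" using r unfolding x_def by simp
  have xSuc: "vs ! (((r + d) mod k + 1) mod k) = x (Suc d)" for d
    unfolding x_def by (simp add: mod_Suc_eq)
  have FB: "(x d, x (Suc d)) \<in> Z \<or> (x (Suc d), x d) \<in> Z" for d
  proof -
    have "(r+d) mod k < k" using kpos by simp
    then have "{x d, x (Suc d)} \<in> {{vs ! i, vs ! ((i + 1) mod k)} | i. i < k}"
      using xSuc[of d] unfolding x_def by blast
    then have "{x d, x (Suc d)} \<in> {{a, b} | a b. (a, b) \<in> Z}" using edges by simp
    then obtain a b where "(a,b) \<in> Z" "{x d, x (Suc d)} = {a,b}" by auto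
    then show ?thesis by (auto simp: doubleton_eq_iff)
  qed
  have notboth: "\<not> ((x d, x (Suc d)) \<in> Z \<and> (x (Suc d), x d) \<in> Z)" for d
  proof -
    have "(r+d) mod k < k" using kpos by simp
    then show ?thesis using noboth xSuc[of d] unfolding x_def by metis
  qed
  have xne: "x d \<noteq> u0" if "0 < d" "d < k" for d
    using xinj[of d 0] that x0 kpos by auto
  have outsub: "b = x 1 \<or> b = x (k-1)" if ub: "(u0,b) \<in> Z" for b
  proof -
    obtain i where i: "i < k" "{u0,b} = {vs!i, vs!((i+1) mod k)}" using edge_in[OF ub] by auto
    have i1: "(i+1) mod k < k" using kpos by simp
    from i(2) have "(u0 = vs!i \<and> b = vs!((i+1) mod k)) \<or> (u0 = vs!((i+1) mod k) \<and> b = vs!i)"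
      by (auto simp: doubleton_eq_iff)
    then show ?thesis
    proof
      assume h: "u0 = vs!i \<and> b = vs!((i+1) mod k)"
      then have "i = r" using nth_eq_iff_index_eq[OF dist] i(1) r unfolding k_def by metis
      then show ?thesis using h unfolding x_def by simp
    next
      assume h: "u0 = vs!((i+1) mod k) \<and> b = vs!i"
      then have ir: "(i+1) mod k = r" using nth_eq_iff_index_eq[OF dist] i1 r unfolding k_def by metis
      have "(r + (k-1)) mod k = i"
      proof (cases "i + 1 < k")
        case True
        then have "r = i + 1" using ir by simp
        then have "r + (k-1) = i + k" using kpos by simp
        then show ?thesis using i(1) by simp
      next
        case False
        then have "i = k - 1" using i(1) by simp
        then have "r = 0" using ir kpos by simp
        then show ?thesis using \<open>i = k - 1\<close> kpos by simp
      qed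
      then show ?thesis using h unfolding x_def by simp
    qed
  qed
  have x1k: "x 1 \<noteq> x (k-1)" using xinj[of 1 "k-1"] k3 by auto
  let ?S = "{w. (u0,w)\<in>Z}"
  have Ssub: "?S \<subseteq> {x 1, x (k-1)}" using outsub by auto
  have in1: "(u0, x 1) \<in> Z"
  proof (rule ccontr)
    assume "(u0, x 1) \<notin> Z"
    then have "?S \<subseteq> {x (k-1)}" using Ssub by auto
    then have "card ?S \<le> 1" using card_mono[of "{x (k-1)}" ?S] by simp
    then show False using u0(2) by simp
  qed
  have in2: "(u0, x (k-1)) \<in> Z"
  proof (rule ccontr)
    assume "(u0, x (k-1)) \<notin> Z"
    then have "?S \<subseteq> {x 1}" using Ssub by auto
    then have "card ?S \<le> 1" using card_mono[of "{x 1}" ?S] by simp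
    then show False using u0(2) by simp
  qed
  have F0: "(x 0, x (Suc 0)) \<in> Z" using in1 x0 by simp
  have Bk: "(x (Suc (k-1)), x (k-1)) \<in> Z" using in2 xk kpos by simp
  have notwo: "\<not> ((x d, x (d-1)) \<in> Z \<and> (x d, x (Suc d)) \<in> Z)" if "0 < d" "d < k" for d
  proof
    assume h: "(x d, x (d-1)) \<in> Z \<and> (x d, x (Suc d)) \<in> Z"
    have dd: "x (d-1) \<noteq> x (Suc d)"
    proof (cases "Suc d < k")
      case True
      have "d - 1 < k" using True by simp
      then show ?thesis using xinj[of "d-1" "Suc d"] True by auto
    next
      case False
      then have "Suc d = k" using that by simp
      then have "x (Suc d) = x 0" using xk x0 by simp
      have "d - 1 < k" "d - 1 \<noteq> 0" using that k3 \<open>Suc d = k\<close> by auto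
      then show ?thesis using xinj[of "d-1" 0] kpos \<open>x (Suc d) = x 0\<close> by auto
    qed
    let ?S' = "{w. (x d, w) \<in> Z}"
    have fS: "finite ?S'"
      by (rule finite_subset[of _ "snd ` Z"]) (use finZ in \<open>force+\<close>)
    have "{x (d-1), x (Suc d)} \<subseteq> ?S'" using h by auto
    then have "card {x (d-1), x (Suc d)} \<le> card ?S'" using card_mono[OF fS] by blast
    then have c2: "card ?S' \<ge> 2" using dd by simp
    have "x d \<in> nodes_of Z" using h unfolding nodes_of_def by force
    then have "x d \<in> U_nodes Z" using c2 unfolding U_nodes_def by simp
    then show False using U xne[OF that] by simp
  qed
  define q where "q = (LEAST d. (x (Suc d), x d) \<in> Z)"
  have Bq: "(x (Suc q), x q) \<in> Z" unfolding q_def using Bk by (rule LeastI)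
  have qle: "q \<le> k - 1" unfolding q_def using Bk by (rule Least_le)
  have q0: "q \<noteq> 0"
  proof
    assume "q = 0"
    then show False using Bq F0 notboth[of 0] by simp
  qed
  have Fbelow: "(x d, x (Suc d)) \<in> Z" if "d < q" for d
    using not_less_Least[OF that[unfolded q_def]] FB[of d] unfolding q_def by blast
  have chain1: "m \<le> q \<longrightarrow> x q \<subseteq> x (q - m)" for m
  proof (induction m)
    case 0 then show ?case by simp
  next
    case (Suc m)
    show ?case
    proof
      assume sm: "Suc m \<le> q"
      have "(x (q - Suc m), x (Suc (q - Suc m))) \<in> Z" using Fbelow[of "q - Suc m"] sm by simp
      moreover have "Suc (q - Suc m) = q - m" using sm by simp
      ultimately have "x (q - m) \<subseteq> x (q - Suc m)" using arcs by metis
      then show "x q \<subseteq> x (q - Suc m)" using Suc sm by auto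
    qed
  qed
  have c1: "x q \<subseteq> x 1" using chain1[of "q - 1"] q0 by simp
  have chain2: "q + m \<le> k - 1 \<longrightarrow> (x (Suc (q+m)), x (q+m)) \<in> Z \<and> x q \<subseteq> x (q+m)" for m
  proof (induction m)
    case 0 then show ?case using Bq by simp
  next
    case (Suc m)
    show ?case
    proof
      assume sm: "q + Suc m \<le> k - 1"
      then have ih: "(x (Suc (q+m)), x (q+m)) \<in> Z" "x q \<subseteq> x (q+m)" using Suc by auto
      have "x (q+m) \<subseteq> x (Suc (q+m))" using arcs[OF ih(1)] by simp
      then have sub: "x q \<subseteq> x (q + Suc m)" using ih(2) by simp
      have "0 < q + Suc m" "q + Suc m < k" using sm kpos by auto
      from notwo[OF this] have "(x (q + Suc m), x (Suc (q + Suc m))) \<notin> Z" using ih(1) by simp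
      then have "(x (Suc (q + Suc m)), x (q + Suc m)) \<in> Z" using FB[of "q + Suc m"] by simp
      then show "(x (Suc (q + Suc m)), x (q + Suc m)) \<in> Z \<and> x q \<subseteq> x (q + Suc m)" using sub by simp
    qed
  qed
  have qq: "q + (k - 1 - q) = k - 1" using qle by simp
  have c2: "x q \<subseteq> x (k-1)" using chain2[of "k - 1 - q"] qq by simp
  have "x q \<noteq> {}" using arcs[OF Bq] by simp
  then have "x 1 \<inter> x (k-1) \<noteq> {}" using c1 c2 by blast
  then show ?thesis using in1 in2 x1k \<open>u0 \<in> set vs\<close> by blast
qed

lemma lin1: assumes "linearization n M C"
  shows "\<forall>m\<in>M. m \<noteq> {} \<and> m \<subseteq> {1..n}"
  using assms unfolding linearization_def by (elim conjE) assumption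

lemma lin2: assumes "linearization n M C"
  shows "singletons n \<subseteq> M"
  using assms unfolding linearization_def by (elim conjE) assumption

lemma avg_ge: fixes p q v t :: real
  assumes "0 < t" "t < 1" "v = (1-t)*p + t*q" "v \<le> p" "v \<le> q"
  shows "p = v \<and> q = v"
proof -
  have h1: "(1-t)*(p-v) \<ge> 0" "t*(q-v) \<ge> 0" using assms by auto
  have "(1-t)*(p-v) + t*(q-v) = 0" using assms(3) by (simp add: algebra_simps)
  then have "(1-t)*(p-v) = 0" "t*(q-v) = 0" using h1 by linarith+
  then show ?thesis using assms(1,2) by auto
qed

lemma avg_le: fixes p q v t :: real
  assumes "0 < t" "t < 1" "v = (1-t)*p + t*q" "p \<le> v" "q \<le> v"
  shows "p = v \<and> q = v"
proof -
  have h1: "(1-t)*(v-p) \<ge> 0" "t*(v-q) \<ge> 0" using assms by auto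
  have "(1-t)*(v-p) + t*(v-q) = 0" using assms(3) by (simp add: algebra_simps)
  then have "(1-t)*(v-p) = 0" "t*(v-q) = 0" using h1 by linarith+
  then show ?thesis using assms(1,2) by auto
qed

theorem lemma3p13:
  fixes n :: nat and M :: "nat set set" and C :: "nat set set set"
    and T :: "nat set set" and Z :: "(nat set \<times> nat set) set" and vs :: "nat set list"
  assumes "simple_lin n M C"
    and "T \<subseteq> proper_monos n M"
    and "undirected_cycle_subgraph C Z vs"
    and "set vs \<subseteq> succ_D C T"
    and "card (U_nodes Z) = 1"
  shows "\<not> integral_polytope (proj_on (singletons n \<union> T) ` polytope_L n M C)"
proof
  assume integ: "integral_polytope (proj_on (singletons n \<union> T) ` polytope_L n M C)"
  have SL: "simple_lin n M C" using assms(1) .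
  have lin: "linearization n M C" using assms unfolding simple_lin_def by auto
  have ZA: "Z \<subseteq> arcs_D C" using assms(3) unfolding undirected_cycle_subgraph_def by auto
  have arcM: "a \<in> M \<and> b \<in> M \<and> b \<subseteq> a" if ab: "(a,b) \<in> arcs_D C" for a b
  proof -
    obtain c where c: "c \<in> C" "a = \<Union>c" "b \<in> c" using ab unfolding arcs_D_def by auto
    then show ?thesis using lin3[OF lin] c by auto
  qed
  have arcs: "b \<subseteq> a \<and> b \<noteq> {}" if "(a,b) \<in> Z" for a b
    using arcM[of a b] ZA that lin1[OF lin] by auto
  have finZ: "finite Z"
    by (rule finite_subset[of _ "M \<times> M"]) (use ZA arcM finM(1)[OF lin] in auto)
  obtain u x y where uxy: "(u,x) \<in> Z" "(u,y) \<in> Z" "x \<noteq> y" "x \<inter> y \<noteq> {}" "u \<in> set vs"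
    using cyc[OF arcs finZ assms(3,5)] by blast
  obtain j where j: "j \<in> x" "j \<in> y" using uxy(4) by blast
  obtain c where c: "c \<in> C" "u = \<Union>c" "x \<in> c" using uxy(1) ZA unfolding arcs_D_def by auto
  obtain c' where c': "c' \<in> C" "u = \<Union>c'" "y \<in> c'" using uxy(2) ZA unfolding arcs_D_def by auto
  have "c = c'" using C_proper(2)[OF SL c(1)] C_proper(2)[OF SL c'(1)] c(2) c'(2) by simp
  have xM: "x \<in> M" "y \<in> M" using arcM uxy(1,2) ZA by auto
  have "npw C j u \<ge> 2"
    using npw_two[OF SL c(1) c(3), of y j] c' \<open>c = c'\<close> uxy(3) npw_ge1[OF SL xM(1) j(1)]
      npw_ge1[OF SL xM(2) j(2)] c(2) by simp
  obtain t where t: "t \<in> T" "(t, u) \<in> (arcs_D C)\<^sup>*"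
    using assms(4) uxy(5) unfolding succ_D_def by auto
  define N where "N = npw C j t"
  have N2: "N \<ge> 2" using npw_rtrancl[OF SL t(2), of j] \<open>npw C j u \<ge> 2\<close> unfolding N_def by simp
  have tM: "t \<in> M" using t(1) assms(2) unfolding proper_monos_def by auto
  have xsub: "x \<subseteq> {1..n}" using bspec[OF lin1[OF lin] xM(1)] by simp
  have jn: "j \<in> {1..n}" using subsetD[OF xsub j(1)] .
  have SM: "singletons n \<union> T \<subseteq> M" using lin2[OF lin] assms(2) unfolding proper_monos_def by auto
  have jS: "{j} \<in> singletons n" using jn unfolding singletons_def by auto
  define e where "e = 1 / N"
  have e0: "0 \<le> e" "e < 1" "e * N = 1" using N2 unfolding e_def by auto
  define f where "f = (\<lambda>m. if m \<in> M then 1 - min 1 (e * npw C j m) else 0)"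
  have fP: "f \<in> polytope_L n M C" unfolding f_def using lemB[OF SL e0(1)] .
  let ?K = "proj_on (singletons n \<union> T) ` polytope_L n M C"
  define v where "v = proj_on (singletons n \<union> T) f"
  have vK: "v \<in> ?K" using fP unfolding v_def by auto
  have vm: "m \<in> singletons n \<union> T \<Longrightarrow> v m = 1 - min 1 (e * npw C j m)" for m
    using SM unfolding v_def proj_on_def f_def by auto
  have vj: "v {j} = 1 - e" using vm[of "{j}"] jS e0 npw_single[of C j j] by simp
  have vt: "v t = 0" using vm[of t] t(1) e0 unfolding N_def by simp
  have vi: "v {i} = 1" if "i \<in> {1..n}" "i \<noteq> j" for i
    using vm[of "{i}"] that npw_single[of C j i] unfolding singletons_def by auto
  have vnotint: "v {j} \<notin> \<int>"
  proof
    assume "v {j} \<in> \<int>"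
    then obtain z :: int where "v {j} = of_int z" by (auto elim: Ints_cases)
    moreover have "0 < v {j}" "v {j} < 1" using vj e0 N2 unfolding e_def by auto
    ultimately show False by (metis of_int_0_less_iff of_int_less_1_iff zless_imp_add1_zle
        add.left_neutral not_less)
  qed
  have vert: "vertex_of v ?K"
    unfolding vertex_of_def
  proof (intro conjI vK notI)
    assume "\<exists>a\<in>?K. \<exists>b\<in>?K. \<exists>\<tau>::real. 0 < \<tau> \<and> \<tau> < 1 \<and> a \<noteq> b \<and>
          v = (\<lambda>m. (1 - \<tau>) * a m + \<tau> * b m)"
    then obtain ya yb \<tau> where ya: "ya \<in> polytope_L n M C" and yb: "yb \<in> polytope_L n M C"
      and tau: "0 < \<tau>" "\<tau> < 1"
      and neq: "proj_on (singletons n \<union> T) ya \<noteq> proj_on (singletons n \<union> T) yb"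
      and veq: "v = (\<lambda>m. (1 - \<tau>) * proj_on (singletons n \<union> T) ya m + \<tau> * proj_on (singletons n \<union> T) yb m)"
      by blast
    have vS: "v m = (1 - \<tau>) * ya m + \<tau> * yb m" if "m \<in> singletons n \<union> T" for m
      using veq that unfolding proj_on_def by (simp add: fun_eq_iff)
    have bnd: "0 \<le> ya m \<and> ya m \<le> 1 \<and> 0 \<le> yb m \<and> yb m \<le> 1" if "m \<in> M" for m
      using ya yb that unfolding polytope_L_def by auto
    have ones: "ya {i} = 1 \<and> yb {i} = 1" if "i \<in> {1..n}" "i \<noteq> j" for i
    proof -
      have iS: "{i} \<in> singletons n" using that unfolding singletons_def by auto
      have "ya {i} = v {i} \<and> yb {i} = v {i}"
        using avg_le[OF tau vS[of "{i}"]] iS bnd[of "{i}"] SM vi[OF that] by auto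
      then show ?thesis using vi[OF that] by simp
    qed
    have tz: "ya t = 0 \<and> yb t = 0"
      using avg_ge[OF tau vS[of t]] t(1) bnd[OF tM] vt by auto
    have jle: "w {j} \<le> 1 - e" if w: "w \<in> polytope_L n M C" "w t = 0"
       "\<forall>i\<in>{1..n}. i \<noteq> j \<longrightarrow> w {i} = 1" for w
    proof -
      have "w t \<ge> 1 - min 1 ((1 - w {j}) * N)" using lemA[OF SL w(1) w(3) jn tM] unfolding N_def .
      then have "(1 - w {j}) * N \<ge> 1" using w(2) by simp
      then have "1 - w {j} \<ge> 1 / N" using N2 by (simp add: divide_le_eq mult.commute)
      then show ?thesis unfolding e_def by simp
    qed
    have jeq: "ya {j} = 1 - e \<and> yb {j} = 1 - e"
      using avg_le[OF tau vS[of "{j}"]] jS jle[OF ya] jle[OF yb] tz ones vj by auto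
    have all: "ya m = yb m" if m: "m \<in> singletons n \<union> T" for m
    proof -
      have mM: "m \<in> M" using m SM by auto
      have "ya m \<ge> v m" using lemA[OF SL ya _ jn mM] ones jeq vm[OF m] by simp
      moreover have "yb m \<ge> v m" using lemA[OF SL yb _ jn mM] ones jeq vm[OF m] by simp
      ultimately show ?thesis using avg_ge[OF tau vS[OF m]] by simp
    qed
    have "proj_on (singletons n \<union> T) ya = proj_on (singletons n \<union> T) yb"
      unfolding proj_on_def using all by (auto simp: fun_eq_iff)
    then show False using neq by simp
  qed
  show False using integ vert vnotint unfolding integral_polytope_def by blast
qed

end
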